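(* Consider a finite set of users $\mathcal{I}$, a finite set of time periods $\mathcal{T}$, and a finite set of types $\mathcal{K}=\{1,\dots,K\}$. Each user $i$ has deterministic demand $D_i^t\ge 0$ in period $t$ and belongs to exactly one type $k\in\mathcal{K}$, in which case his value of lost load is $V_i^t=V_k^t$; assume $V_1^t\le V_2^t\le\cdots\le V_K^t$ for every $t$. Let $D_a^t=\sum_{i\in\mathcal{I}}D_i^t>0$. Fix a renewable capacity $r\ge 0$ and random variables $\Theta^t$ supported in $[0,1]$; let $s^t=\min(D_a^t, r\Theta^t)$ and $d_i^t=\frac{D_i^t}{D_a^t}s^t$. Fix a price $p$ with $p\le V_1^t$ for all $t$. A contract assigns to each type $k$ premium fees $(\pi_k^t)_{t\in\mathcal{T}}$; a user $i$ choosing contract item $o\in\mathcal{K}$ has cost $$CU_i(o)=\sum_{t}\pi_o^tD_i^t+\sum_t p\,\mathbb{E}[d_i^t]+\sum_t\mathbb{E}[V_i^t(D_i^t-d_i^t)]-\sum_t\mathbb{E}[(V_o^t-p)(D_i^t-d_i^t)],$$ and a user buying no insurance has cost $CU_i(0)=\sum_t p\,\mathbb{E}[d_i^t]+\sum_t\mathbb{E}[V_i^t(D_i^t-d_i^t)]$. Suppose the premium fees satisfy $$\pi_k^t-\pi_m^t=(V_k^t-V_m^t)\,\mathbb{E}\Big[1-\frac{s^t}{D_a^t}\Big]\quad\forall t\in\mathcal{T},\ \forall m,k\in\mathcal{K},$$ $$0\le \pi_k^t\le (V_k^t-p)\,\mathbb{E}\Big[1-\frac{s^t}{D_a^t}\Big]\quad\forall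 t\in\mathcal{T},\ \forall k\in\mathcal{K}.$$ Then the contract is valid: for every user $i$ of type $k$, $CU_i(k)\le CU_i(0)$ (individual rationality) and $CU_i(k)\le CU_i(m)$ for all $m\in\mathcal{K}$ (incentive compatibility). Moreover, premium fees satisfying both displayed conditions always exist.
   Context: A contract is called valid if it satisfies Individual Rationality (each user of type $k$ weakly prefers the type-$k$ contract item to not purchasing insurance, i.e. $CU_i(k)\le CU_i(0)$) and Incentive Compatibility (each user of type $k$ weakly prefers the type-$k$ item to any other item $m$, i.e. $CU_i(k)\le CU_i(m)$). The expectation is over $\Theta^t$. *)

theory Defs
  imports "HOL-Probability.Probability"
begin

text \<open>Users: finite set I of type 'i; periods: finite set T of type 't;
 types: {1..K}. D i t is the demand of user i in period t, tau i is the type of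
 user i, V k t the value of lost load of type k in period t.\<close>

definition Dagg :: "'i set \<Rightarrow> ('i \<Rightarrow> 't \<Rightarrow> real) \<Rightarrow> 't \<Rightarrow> real" where
  "Dagg I D t = (\<Sum>i\<in>I. D i t)"

definition renew_supply :: "'i set \<Rightarrow> ('i \<Rightarrow> 't \<Rightarrow> real) \<Rightarrow> real \<Rightarrow> ('t \<Rightarrow> 'w \<Rightarrow> real) \<Rightarrow> 't \<Rightarrow> 'w \<Rightarrow> real" where
  "renew_supply I D r Theta t w = min (Dagg I D t) (r * Theta t w)"

definition served :: "'i set \<Rightarrow> ('i \<Rightarrow> 't \<Rightarrow> real) \<Rightarrow> real \<Rightarrow> ('t \<Rightarrow> 'w \<Rightarrow> real) \<Rightarrow> 'i \<Rightarrow> 't \<Rightarrow> 'w \<Rightarrow> real" where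
  "served I D r Theta i t w = D i t / Dagg I D t * renew_supply I D r Theta t w"

definition CU :: "'w measure \<Rightarrow> 'i set \<Rightarrow> 't set \<Rightarrow> ('i \<Rightarrow> 't \<Rightarrow> real) \<Rightarrow> ('i \<Rightarrow> nat)
   \<Rightarrow> (nat \<Rightarrow> 't \<Rightarrow> real) \<Rightarrow> real \<Rightarrow> real \<Rightarrow> ('t \<Rightarrow> 'w \<Rightarrow> real) \<Rightarrow> (nat \<Rightarrow> 't \<Rightarrow> real)
   \<Rightarrow> 'i \<Rightarrow> nat \<Rightarrow> real" where
  "CU M I T D tau V p r Theta prem i ch =
     (\<Sum>t\<in>T. prem ch t * D i t)
   + (\<Sum>t\<in>T. p * integral\<^sup>L M (\<lambda>w. served I D r Theta i t w))
   + (\<Sum>t\<in>T. integral\<^sup>L M (\<lambda>w. V (tau i) t * (D i t - served I D r Theta i t w)))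
   - (\<Sum>t\<in>T. integral\<^sup>L M (\<lambda>w. (V ch t - p) * (D i t - served I D r Theta i t w)))"

definition CU0 :: "'w measure \<Rightarrow> 'i set \<Rightarrow> 't set \<Rightarrow> ('i \<Rightarrow> 't \<Rightarrow> real) \<Rightarrow> ('i \<Rightarrow> nat)
   \<Rightarrow> (nat \<Rightarrow> 't \<Rightarrow> real) \<Rightarrow> real \<Rightarrow> real \<Rightarrow> ('t \<Rightarrow> 'w \<Rightarrow> real) \<Rightarrow> 'i \<Rightarrow> real" where
  "CU0 M I T D tau V p r Theta i =
     (\<Sum>t\<in>T. p * integral\<^sup>L M (\<lambda>w. served I D r Theta i t w))
   + (\<Sum>t\<in>T. integral\<^sup>L M (\<lambda>w. V (tau i) t * (D i t - served I D r Theta i t w)))"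

definition valid_contract :: "'w measure \<Rightarrow> 'i set \<Rightarrow> 't set \<Rightarrow> nat \<Rightarrow> ('i \<Rightarrow> 't \<Rightarrow> real) \<Rightarrow> ('i \<Rightarrow> nat)
   \<Rightarrow> (nat \<Rightarrow> 't \<Rightarrow> real) \<Rightarrow> real \<Rightarrow> real \<Rightarrow> ('t \<Rightarrow> 'w \<Rightarrow> real) \<Rightarrow> (nat \<Rightarrow> 't \<Rightarrow> real) \<Rightarrow> bool" where
  "valid_contract M I T K D tau V p r Theta prem \<longleftrightarrow>
     (\<forall>i\<in>I. CU M I T D tau V p r Theta prem i (tau i) \<le> CU0 M I T D tau V p r Theta i
          \<and> (\<forall>m\<in>{1..K}. CU M I T D tau V p r Theta prem i (tau i) \<le> CU M I T D tau V p r Theta prem i m))"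

definition premium_conditions :: "'w measure \<Rightarrow> 'i set \<Rightarrow> 't set \<Rightarrow> nat \<Rightarrow> ('i \<Rightarrow> 't \<Rightarrow> real)
   \<Rightarrow> (nat \<Rightarrow> 't \<Rightarrow> real) \<Rightarrow> real \<Rightarrow> real \<Rightarrow> ('t \<Rightarrow> 'w \<Rightarrow> real) \<Rightarrow> (nat \<Rightarrow> 't \<Rightarrow> real) \<Rightarrow> bool" where
  "premium_conditions M I T K D V p r Theta prem \<longleftrightarrow>
     (\<forall>t\<in>T. \<forall>m\<in>{1..K}. \<forall>k\<in>{1..K}.
        prem k t - prem m t = (V k t - V m t) *
          integral\<^sup>L M (\<lambda>w. 1 - renew_supply I D r Theta t w / Dagg I D t))
   \<and> (\<forall>t\<in>T. \<forall>k\<in>{1..K}. 0 \<le> prem k t \<and>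
        prem k t \<le> (V k t - p) *
          integral\<^sup>L M (\<lambda>w. 1 - renew_supply I D r Theta t w / Dagg I D t))"

end

theory Submission
  imports Defs
begin

lemma served_int:
  assumes "Dagg I D t \<noteq> 0"
  shows "integral\<^sup>L M (\<lambda>w. c * (D i t - served I D r Theta i t w))
     = c * D i t * integral\<^sup>L M (\<lambda>w. 1 - renew_supply I D r Theta t w / Dagg I D t)"
proof -
  have "(\<lambda>w. c * (D i t - served I D r Theta i t w))
      = (\<lambda>w. (c * D i t) * (1 - renew_supply I D r Theta t w / Dagg I D t))"
    using assms by (auto simp: served_def right_diff_distrib)
  then show ?thesis by simp
qed

theorem theorem1:
  fixes M :: "'w measure" and I :: "'i set" and T :: "'t set" and K :: nat
    and D :: "'i \<Rightarrow> 't \<Rightarrow> real" and tau :: "'i \<Rightarrow> nat"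
    and V :: "nat \<Rightarrow> 't \<Rightarrow> real" and p r :: real
    and Theta :: "'t \<Rightarrow> 'w \<Rightarrow> real"
  assumes "prob_space M"
    and "finite I" and "finite T"
    and "\<forall>i\<in>I. tau i \<in> {1..K}"
    and "\<forall>i\<in>I. \<forall>t\<in>T. 0 \<le> D i t"
    and "\<forall>t\<in>T. \<forall>k\<in>{1..K}. \<forall>k'\<in>{1..K}. k \<le> k' \<longrightarrow> V k t \<le> V k' t"
    and "\<forall>t\<in>T. Dagg I D t > 0"
    and "r \<ge> 0"
    and "\<forall>t\<in>T. Theta t \<in> borel_measurable M"
    and "\<forall>t\<in>T. AE w in M. 0 \<le> Theta t w \<and> Theta t w \<le> 1"
    and "\<forall>t\<in>T. p \<le> V 1 t"
  shows "(\<forall>prem. premium_conditions M I T K D V p r Theta prem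
              \<longrightarrow> valid_contract M I T K D tau V p r Theta prem)
       \<and> (\<exists>prem. premium_conditions M I T K D V p r Theta prem)"
proof -
  define E where "E t = integral\<^sup>L M (\<lambda>w. 1 - renew_supply I D r Theta t w / Dagg I D t)" for t
  have Enn: "0 \<le> E t" if "t \<in> T" for t
  proof -
    have "Dagg I D t > 0" using assms(7) that by auto
    then have "0 \<le> 1 - renew_supply I D r Theta t w / Dagg I D t" for w
      by (simp add: renew_supply_def field_simps)
    then show ?thesis unfolding E_def by (intro integral_nonneg_AE) auto
  qed
  have CUe: "CU M I T D tau V p r Theta prem i ch
      = (\<Sum>t\<in>T. prem ch t * D i t) + CU0 M I T D tau V p r Theta i
        - (\<Sum>t\<in>T. (V ch t - p) * D i t * E t)" for prem i ch
  proof -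
    have "(\<Sum>t\<in>T. integral\<^sup>L M (\<lambda>w. (V ch t - p) * (D i t - served I D r Theta i t w)))
       = (\<Sum>t\<in>T. (V ch t - p) * D i t * E t)"
      using assms(7) unfolding E_def by (intro sum.cong refl served_int) auto
    then show ?thesis unfolding CU_def CU0_def by simp
  qed
  have part1: "valid_contract M I T K D tau V p r Theta prem"
    if pc: "premium_conditions M I T K D V p r Theta prem" for prem
    unfolding valid_contract_def
  proof (intro ballI conjI)
    fix i assume i: "i \<in> I"
    have k: "tau i \<in> {1..K}" using assms(4) i by auto
    have "(\<Sum>t\<in>T. prem (tau i) t * D i t) \<le> (\<Sum>t\<in>T. (V (tau i) t - p) * D i t * E t)"
    proof (intro sum_mono)
      fix t assume t: "t \<in> T"
      have "prem (tau i) t \<le> (V (tau i) t - p) * E t" using pc k t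
        unfolding premium_conditions_def E_def by auto
      moreover have "0 \<le> D i t" using assms(5) i t by auto
      ultimately show "prem (tau i) t * D i t \<le> (V (tau i) t - p) * D i t * E t"
        by (metis mult.commute mult.left_commute mult_right_mono)
    qed
    then show "CU M I T D tau V p r Theta prem i (tau i) \<le> CU0 M I T D tau V p r Theta i"
      unfolding CUe by simp
    fix m assume m: "m \<in> {1..K}"
    have "(\<Sum>t\<in>T. prem (tau i) t * D i t - (V (tau i) t - p) * D i t * E t)
        = (\<Sum>t\<in>T. prem m t * D i t - (V m t - p) * D i t * E t)"
    proof (intro sum.cong refl)
      fix t assume t: "t \<in> T"
      have "prem (tau i) t - prem m t = (V (tau i) t - V m t) * E t" using pc k m t
        unfolding premium_conditions_def E_def by auto
      then show "prem (tau i) t * D i t - (V (tau i) t - p) * D i t * E t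
          = prem m t * D i t - (V m t - p) * D i t * E t"
      proof -
        have "prem (tau i) t = prem m t + (V (tau i) t - V m t) * E t" using \<open>prem (tau i) t - prem m t = (V (tau i) t - V m t) * E t\<close> by linarith
        then show ?thesis by (simp only:) (simp add: algebra_simps)
      qed
    qed
    then show "CU M I T D tau V p r Theta prem i (tau i) \<le> CU M I T D tau V p r Theta prem i m"
      unfolding CUe by (simp add: sum_subtractf)
  qed
  have "premium_conditions M I T K D V p r Theta (\<lambda>k t. (V k t - p) * E t)"
    unfolding premium_conditions_def
  proof (intro conjI ballI)
    fix t k assume t: "t \<in> T" and k: "k \<in> {1..K}"
    then have "V 1 t \<le> V k t" using assms(6) by auto
    then show "0 \<le> (V k t - p) * E t" using assms(11) t Enn[OF t] by auto
    show "(V k t - p) * E t \<le> (V k t - p) * integral\<^sup>L M (\<lambda>w. 1 - renew_supply I D r Theta t w / Dagg I D t)"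
      by (simp add: E_def)
  next
    fix t m k assume "t \<in> T" "m \<in> {1..K}" "k \<in> {1..K}"
    show "(V k t - p) * E t - (V m t - p) * E t = (V k t - V m t) * integral\<^sup>L M (\<lambda>w. 1 - renew_supply I D r Theta t w / Dagg I D t)"
      by (simp add: E_def algebra_simps)
  qed
  then show ?thesis using part1 by blast
qed

end
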